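(* If $C$ is a line through $O$, then $\Delta_{C,s_+}=\Delta_{1,s,1}$ for every rational $s\ge1$; hence $\Delta_{C,s_+}$ depends linearly on $s$ and there are no mutations.
   Context: Work over $\mathbb C$; $x=X/Z$, $y=Y/Z$, $O=(0,0)$; the line $C$ is taken to be tangent to (i.e. equal to) $\{y=0\}$ near $O$, parametrized as $x\mapsto(x,\xi(x))$ with $\xi=0$ after coordinates are chosen. For $f\ne0$ with $C$-expansion $f=\sum a_{ij}x^i(y-\xi(x))^j$, $v_1(C,s;f)=\min\{i+sj:a_{ij}\ne0\}$, and $v_+(C,s)(f)=(v_1(C,s;f),\min\{j:\exists i,\ a_{ij}\ne0,\ i+sj=v_1(C,s;f)\})$. $\Delta_{C,s_+}$ is the closure of the convex hull of $\{v_+(C,s)(F/Z^k)/k:k\ge1,\ F\ne0\text{ homogeneous of degree }k\}$. $\Delta_{a,b,c}$ is the triangle with vertices $(0,0),(a,0),(b,c)$. $\Delta_{C,s_+}$ depends linearly on $s$ in an interval $I$ if the number of vertices other than the origin is constant on $I$ and their coordinates are affine functions of $s$ on $I$. With $d=\deg C$, $\Delta_{C,s_+}$ is continuous at $s_0\in(1,d^2)$ if for every $\epsilon>0$ there is $\delta>0$ such that for all rational $s$ with $|s-s_0|<\delta$ every vertex of $\Delta_{C,s_+}$ is within distance $\epsilon$ of $\partial\Delta_{C,s_{0+}}$; otherwise it mutates at $s_0$. *)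

theory Defs
  imports "HOL-Analysis.Analysis"
begin

text \<open>A homogeneous polynomial F(X,Y,Z) of degree k over the complex numbers is
represented by its coefficient function c, where c i j is the coefficient of
X^i Y^j Z^(k-i-j); coefficients with i + j > k vanish.  The rational function
f = F/Z^k in the affine coordinates x = X/Z, y = Y/Z is then
f = sum of c i j x^i y^j.\<close>

definition hom_coeffs :: "nat \<Rightarrow> (nat \<Rightarrow> nat \<Rightarrow> complex) \<Rightarrow> bool" where
  "hom_coeffs k c \<longleftrightarrow> (\<forall>i j. k < i + j \<longrightarrow> c i j = 0)"

text \<open>C-expansion of f = F/Z^k for the line C = {y = 0} through O, i.e. xi = 0:
f = sum a_ij x^i (y - xi(x))^j with a_ij = c i j.\<close>

definition line_expansion :: "(nat \<Rightarrow> nat \<Rightarrow> complex) \<Rightarrow> nat \<Rightarrow> nat \<Rightarrow> complex" where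
  "line_expansion c i j = c i j"

definition v1_line :: "real \<Rightarrow> (nat \<Rightarrow> nat \<Rightarrow> complex) \<Rightarrow> real" where
  "v1_line s c = Min {real i + s * real j | i j. line_expansion c i j \<noteq> 0}"

definition vplus_line :: "real \<Rightarrow> (nat \<Rightarrow> nat \<Rightarrow> complex) \<Rightarrow> real \<times> real" where
  "vplus_line s c = (v1_line s c,
     real (Min {j. \<exists>i. line_expansion c i j \<noteq> 0 \<and> real i + s * real j = v1_line s c}))"

definition Delta_line :: "real \<Rightarrow> (real \<times> real) set" where
  "Delta_line s = closure (convex hull
     {(1 / real k) *\<^sub>R vplus_line s c | k c. k \<ge> 1 \<and> hom_coeffs k c \<and> (\<exists>i j. c i j \<noteq> 0)})"

definition Delta_abc :: "real \<Rightarrow> real \<Rightarrow> real \<Rightarrow> (real \<times> real) set" where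
  "Delta_abc a b c = convex hull {(0, 0), (a, 0), (b, c)}"

definition vertices :: "(real \<times> real) set \<Rightarrow> (real \<times> real) set" where
  "vertices K = {v. v extreme_point_of K}"

definition depends_linearly :: "(real \<Rightarrow> (real \<times> real) set) \<Rightarrow> real set \<Rightarrow> bool" where
  "depends_linearly D I \<longleftrightarrow>
     (\<exists>n::nat. \<exists>A B :: nat \<Rightarrow> real \<times> real.
        \<forall>s \<in> I \<inter> \<rat>. vertices (D s) - {(0, 0)} = {A l + s *\<^sub>R B l | l. l < n}
                      \<and> card (vertices (D s) - {(0, 0)}) = n)"

text \<open>Continuity at s0 (d = deg C): for every eps > 0 there is delta > 0 such that for
all rational s with |s - s0| < delta every vertex of Delta_s is within eps of the
boundary of Delta_{s0}.\<close>

definition continuous_at_s :: "(real \<Rightarrow> (real \<times> real) set) \<Rightarrow> real \<Rightarrow> bool" where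
  "continuous_at_s D s0 \<longleftrightarrow>
     (\<forall>\<epsilon>>0. \<exists>\<delta>>0. \<forall>s \<in> \<rat>. \<bar>s - s0\<bar> < \<delta> \<longrightarrow>
        (\<forall>v \<in> vertices (D s). \<exists>w \<in> frontier (D s0). dist v w < \<epsilon>))"

definition mutates_at :: "(real \<Rightarrow> (real \<times> real) set) \<Rightarrow> nat \<Rightarrow> real \<Rightarrow> bool" where
  "mutates_at D d s0 \<longleftrightarrow> s0 \<in> {1<..<real d ^ 2} \<and> \<not> continuous_at_s D s0"

end

theory Submission
  imports Defs
begin

lemma tri_mem:
  fixes k i j :: nat and s :: real
  assumes "k \<ge> 1" "i + j \<le> k"
  shows "(1 / real k) *\<^sub>R (real i + s * real j, real j) \<in> Delta_abc 1 s 1"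
proof -
  have k: "real k > 0" using assms by simp
  have le: "real i / real k + real j / real k \<le> 1"
    using assms k by (simp add: add_divide_distrib[symmetric] divide_le_eq_1)
  show ?thesis
    unfolding Delta_abc_def convex_hull_3
    apply (rule CollectI)
    apply (rule exI[of _ "1 - real i / real k - real j / real k"])
    apply (rule exI[of _ "real i / real k"])
    apply (rule exI[of _ "real j / real k"])
    using le k assms(2) mult_right_mono[of "real i + real j" "real k" "real k"]
    by (auto simp: field_simps distrib_right)
qed

lemma P_sub:
  assumes "k \<ge> 1" "hom_coeffs k c" "\<exists>i j. c i j \<noteq> 0"
  shows "(1 / real k) *\<^sub>R vplus_line s c \<in> Delta_abc 1 s 1"
proof -
  let ?V = "{real i + s * real j | i j. line_expansion c i j \<noteq> 0}"
  have supp: "c i j \<noteq> 0 \<Longrightarrow> i \<le> k \<and> j \<le> k" for i j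
    using assms(2) unfolding hom_coeffs_def by force
  have "?V \<subseteq> (\<lambda>(i,j). real i + s * real j) ` ({..k} \<times> {..k})"
    using supp by (auto simp: line_expansion_def)
  hence fV: "finite ?V" by (rule finite_subset) auto
  have neV: "?V \<noteq> {}" using assms(3) by (auto simp: line_expansion_def)
  have "v1_line s c \<in> ?V" unfolding v1_line_def using Min_in[OF fV neV] .
  then obtain i0 j0 where h0: "c i0 j0 \<noteq> 0" "v1_line s c = real i0 + s * real j0"
    by (auto simp: line_expansion_def)
  let ?J = "{j. \<exists>i. line_expansion c i j \<noteq> 0 \<and> real i + s * real j = v1_line s c}"
  have fJ: "finite ?J" by (rule finite_subset[of _ "{..k}"]) (auto simp: line_expansion_def dest: supp)
  have neJ: "?J \<noteq> {}" using h0 by (auto simp: line_expansion_def)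
  have "Min ?J \<in> ?J" using Min_in[OF fJ neJ] .
  then obtain i1 where h1: "c i1 (Min ?J) \<noteq> 0" "real i1 + s * real (Min ?J) = v1_line s c"
    by (auto simp: line_expansion_def)
  have "i1 + Min ?J \<le> k" using assms(2) h1(1) unfolding hom_coeffs_def by (meson not_le)
  from tri_mem[OF assms(1) this, of s] h1(2)
  show ?thesis unfolding vplus_line_def by simp
qed

lemma Delta_line_eq: "Delta_line s = Delta_abc 1 s 1"
proof -
  let ?P = "{(1 / real k) *\<^sub>R vplus_line s c | k c. k \<ge> 1 \<and> hom_coeffs k c \<and> (\<exists>i j. c i j \<noteq> 0)}"
  have sub: "?P \<subseteq> Delta_abc 1 s 1" using P_sub by blast
  have v0: "(0,0) \<in> ?P"
  proof -
    let ?c = "\<lambda>i j. if i = 0 \<and> j = 0 then (1::complex) else 0"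
    have "vplus_line s ?c = (0,0)"
    proof -
      have "{real i + s * real j | i j. line_expansion ?c i j \<noteq> 0} = {0}"
        by (auto simp: line_expansion_def)
      hence v: "v1_line s ?c = 0" by (simp add: v1_line_def)
      have "{j. \<exists>i. line_expansion ?c i j \<noteq> 0 \<and> real i + s * real j = v1_line s ?c} = {0}"
        by (auto simp: line_expansion_def v)
      thus ?thesis by (simp add: vplus_line_def v)
    qed
    moreover have "hom_coeffs 1 ?c" by (simp add: hom_coeffs_def)
    ultimately have "\<exists>k c. vplus_line s ?c = (1 / real k) *\<^sub>R vplus_line s c \<and> k \<ge> 1 \<and> hom_coeffs k c \<and> (\<exists>i j. c i j \<noteq> 0)"
      by (intro exI[of _ "1::nat"] exI[of _ ?c]) auto
    with \<open>vplus_line s ?c = _\<close> show ?thesis by (simp only:) blast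
  qed
  have v1: "(1,0) \<in> ?P"
  proof -
    let ?c = "\<lambda>i j. if i = 1 \<and> j = 0 then (1::complex) else 0"
    have "vplus_line s ?c = (1,0)"
    proof -
      have "{real i + s * real j | i j. line_expansion ?c i j \<noteq> 0} = {1}"
        by (auto simp: line_expansion_def)
      hence v: "v1_line s ?c = 1" unfolding v1_line_def by (metis Min_singleton)
      have "{j. \<exists>i. line_expansion ?c i j \<noteq> 0 \<and> real i + s * real j = v1_line s ?c} = {0}"
        unfolding v by (auto simp: line_expansion_def)
      thus ?thesis unfolding vplus_line_def v by simp
    qed
    moreover have "hom_coeffs 1 ?c" by (simp add: hom_coeffs_def)
    ultimately have "\<exists>k c. vplus_line s ?c = (1 / real k) *\<^sub>R vplus_line s c \<and> k \<ge> 1 \<and> hom_coeffs k c \<and> (\<exists>i j. c i j \<noteq> 0)"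
      by (intro exI[of _ "1::nat"] exI[of _ ?c]) auto
    with \<open>vplus_line s ?c = _\<close> show ?thesis by (simp only:) blast
  qed
  have v2: "(s,1) \<in> ?P"
  proof -
    let ?c = "\<lambda>i j. if i = 0 \<and> j = 1 then (1::complex) else 0"
    have "vplus_line s ?c = (s,1)"
    proof -
      have "{real i + s * real j | i j. line_expansion ?c i j \<noteq> 0} = {s}"
        by (auto simp: line_expansion_def)
      hence v: "v1_line s ?c = s" unfolding v1_line_def by (metis Min_singleton)
      have "{j. \<exists>i. line_expansion ?c i j \<noteq> 0 \<and> real i + s * real j = v1_line s ?c} = {1}"
        unfolding v by (auto simp: line_expansion_def)
      thus ?thesis unfolding vplus_line_def v by simp
    qed
    moreover have "hom_coeffs 1 ?c" by (simp add: hom_coeffs_def)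
    ultimately have "\<exists>k c. vplus_line s ?c = (1 / real k) *\<^sub>R vplus_line s c \<and> k \<ge> 1 \<and> hom_coeffs k c \<and> (\<exists>i j. c i j \<noteq> 0)"
      by (intro exI[of _ "1::nat"] exI[of _ ?c]) auto
    with \<open>vplus_line s ?c = _\<close> show ?thesis by (simp only:) blast
  qed
  have cv: "convex (Delta_abc 1 s 1)" by (simp add: Delta_abc_def)
  have "convex hull ?P = Delta_abc 1 s 1"
  proof
    show "convex hull ?P \<subseteq> Delta_abc 1 s 1" using sub cv by (simp add: hull_minimal)
    show "Delta_abc 1 s 1 \<subseteq> convex hull ?P" unfolding Delta_abc_def
      using v0 v1 v2 by (intro hull_mono) auto
  qed
  moreover have "closed (Delta_abc 1 s 1)"
    unfolding Delta_abc_def by (simp add: compact_imp_closed finite_imp_compact_convex_hull)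
  ultimately show ?thesis unfolding Delta_line_def by simp
qed

lemma verts: fixes s :: real shows "vertices (Delta_line s) = {(0,0),(1,0),(s,1)}"
proof -
  have "\<not> collinear {0::real\<times>real, (1,0), (s,1)}"
    unfolding collinear_lemma by (auto simp: zero_prod_def)
  hence "\<not> collinear {(0::real,0::real), (1,0), (s,1)}" by (simp add: zero_prod_def)
  hence "\<not> affine_dependent {(0::real,0::real), (1,0), (s,1)}"
    using collinear_3_eq_affine_dependent by blast
  thus ?thesis unfolding vertices_def Delta_line_eq Delta_abc_def
    using extreme_point_of_convex_hull_affine_independent by blast
qed

theorem proposition5p23:
  shows "(\<forall>s \<in> \<rat>. s \<ge> 1 \<longrightarrow> Delta_line s = Delta_abc 1 s 1)
         \<and> depends_linearly Delta_line {1..}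
         \<and> (\<forall>s0. \<not> mutates_at Delta_line 1 s0)"
proof (intro conjI)
  show "\<forall>s \<in> \<rat>. s \<ge> 1 \<longrightarrow> Delta_line s = Delta_abc 1 s 1" using Delta_line_eq by blast
  show "\<forall>s0. \<not> mutates_at Delta_line 1 s0" by (simp add: mutates_at_def)
  show "depends_linearly Delta_line {1..}"
    unfolding depends_linearly_def
  proof (intro exI ballI conjI)
    fix s :: real assume "s \<in> {1..} \<inter> \<rat>"
    have e: "vertices (Delta_line s) - {(0, 0)} = {(1,0),(s,1)}"
      unfolding verts by auto
    show "vertices (Delta_line s) - {(0, 0)} =
      {(\<lambda>l. if l = 0 then (1,0) else (0,1)) l + s *\<^sub>R (\<lambda>l. if l = 0 then (0,0) else (1,0)) l | l. l < (2::nat)}"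
      unfolding e by (auto simp: less_2_cases_iff)
    show "card (vertices (Delta_line s) - {(0, 0)}) = 2" unfolding e by simp
  qed
qed

end
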